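(* Let $R$ be a finite commutative local principal ideal ring with unity. Then the complement $\overline{\Gamma(R)}$ of the zero divisor graph of $R$ is a divisor graph.
   Context: For a commutative ring $S$ with unity, $Z(S)$ denotes its set of zero divisors. The zero divisor graph $\Gamma(S)$ is the simple graph whose vertex set is $Z(S)\setminus\{0\}$, two distinct vertices $a,b$ being adjacent iff $ab=0$. Its complement $\overline{\Gamma(S)}$ has the same vertex set, two distinct vertices $a,b$ being adjacent iff $ab\neq 0$. For a nonempty set $S$ of positive integers, the divisor graph $G(S)$ has vertex set $S$, with distinct $i,j$ adjacent iff $i\mid j$ or $j\mid i$. A graph is a divisor graph if it is isomorphic to $G(S)$ for some nonempty set $S$ of positive integers. A ring is local if it has a unique maximal ideal. *)

theory Defs
  imports "HOL-Algebra.Ideal"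
begin

definition zero_divisors :: "('a, 'b) ring_scheme \<Rightarrow> 'a set" where
  "zero_divisors R = {a \<in> carrier R. \<exists>b \<in> carrier R. b \<noteq> \<zero>\<^bsub>R\<^esub> \<and> a \<otimes>\<^bsub>R\<^esub> b = \<zero>\<^bsub>R\<^esub>}"

definition local_ring :: "('a, 'b) ring_scheme \<Rightarrow> bool" where
  "local_ring R \<longleftrightarrow> (\<exists>!M. maximalideal M R)"

definition principal_ideal_ring :: "('a, 'b) ring_scheme \<Rightarrow> bool" where
  "principal_ideal_ring R \<longleftrightarrow> (\<forall>I. ideal I R \<longrightarrow> (\<exists>a \<in> carrier R. I = PIdl\<^bsub>R\<^esub> a))"

definition divisor_graph_adj :: "nat \<Rightarrow> nat \<Rightarrow> bool" where
  "divisor_graph_adj i j \<longleftrightarrow> i \<noteq> j \<and> (i dvd j \<or> j dvd i)"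

text \<open>A simple graph (V, E) (E symmetric, only consulted on distinct vertices) is a divisor
  graph if it is isomorphic to G(S) for some nonempty set S of positive integers.\<close>
definition is_divisor_graph :: "'v set \<Rightarrow> ('v \<Rightarrow> 'v \<Rightarrow> bool) \<Rightarrow> bool" where
  "is_divisor_graph V E \<longleftrightarrow>
     (\<exists>S :: nat set. S \<noteq> {} \<and> (\<forall>n \<in> S. 0 < n) \<and>
        (\<exists>f. bij_betw f V S \<and>
             (\<forall>a \<in> V. \<forall>b \<in> V. a \<noteq> b \<longrightarrow> (E a b \<longleftrightarrow> divisor_graph_adj (f a) (f b)))))"

definition zdg_vertices :: "('a, 'b) ring_scheme \<Rightarrow> 'a set" where
  "zdg_vertices R = zero_divisors R - {\<zero>\<^bsub>R\<^esub>}"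

definition compl_zdg_adj :: "('a, 'b) ring_scheme \<Rightarrow> 'a \<Rightarrow> 'a \<Rightarrow> bool" where
  "compl_zdg_adj R a b \<longleftrightarrow> a \<noteq> b \<and> a \<otimes>\<^bsub>R\<^esub> b \<noteq> \<zero>\<^bsub>R\<^esub>"

end

theory Submission
  imports Defs
begin

context cring begin
lemma ann_ideal: assumes "a \<in> carrier R" shows "ideal {x \<in> carrier R. a \<otimes> x = \<zero>} R"
proof (rule idealI)
  show "ring R" by (rule ring_axioms)
  show "subgroup {x \<in> carrier R. a \<otimes> x = \<zero>} (add_monoid R)"
    using assms
    apply (rule_tac add.subgroupI)
       apply blast
      apply (metis (mono_tags, lifting) empty_iff mem_Collect_eq r_null zero_closed)
     apply (simp add: r_minus)
    apply (simp add: r_distr)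
    done
next
  fix b x assume "b \<in> {x \<in> carrier R. a \<otimes> x = \<zero>}" "x \<in> carrier R"
  then have b: "b \<in> carrier R" "a \<otimes> b = \<zero>" by auto
  have "a \<otimes> (x \<otimes> b) = x \<otimes> (a \<otimes> b)" by (rule m_lcomm[OF assms \<open>x \<in> carrier R\<close> b(1)])
  also have "\<dots> = \<zero>" using b \<open>x \<in> carrier R\<close> by simp
  finally show "x \<otimes> b \<in> {x \<in> carrier R. a \<otimes> x = \<zero>}" using b assms \<open>x \<in> carrier R\<close> by simp
  have "a \<otimes> (b \<otimes> x) = (a \<otimes> b) \<otimes> x" by (rule m_assoc[symmetric, OF assms b(1) \<open>x \<in> carrier R\<close>])
  also have "\<dots> = \<zero>" using b \<open>x \<in> carrier R\<close> by simp
  finally show "b \<otimes> x \<in> {x \<in> carrier R. a \<otimes> x = \<zero>}" using b assms \<open>x \<in> carrier R\<close> by simp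
qed

lemma finite_max_ideal:
  assumes fin: "finite (carrier R)" and I: "ideal I R" and ne: "I \<noteq> carrier R"
  shows "\<exists>M. maximalideal M R \<and> I \<subseteq> M"
proof -
  let ?C = "{J. ideal J R \<and> I \<subseteq> J \<and> J \<noteq> carrier R}"
  have "?C \<subseteq> Pow (carrier R)"
  proof
    fix J assume "J \<in> ?C"
    then have "ideal J R" by simp
    then have "J \<subseteq> carrier R" by (rule additive_subgroup.a_subset[OF ideal.axioms(1)])
    then show "J \<in> Pow (carrier R)" by simp
  qed
  have "I \<in> ?C" using I ne by auto
  then obtain J where J: "J \<in> ?C" and Jm: "\<forall>K\<in>?C. card K \<le> card J"
  proof -
    have bd: "\<forall>y. y \<in> card ` ?C \<longrightarrow> y \<le> card (carrier R)"
    proof (intro allI impI)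
      fix y assume "y \<in> card ` ?C"
      then obtain K where "K \<in> ?C" "y = card K" by blast
      then have "K \<subseteq> carrier R" using \<open>?C \<subseteq> Pow (carrier R)\<close> by blast
      then show "y \<le> card (carrier R)" using \<open>y = card K\<close> card_mono[OF fin] by simp
    qed
    have "card I \<in> card ` ?C" using \<open>I \<in> ?C\<close> by (rule imageI)
    from Nat.ex_has_greatest_nat[of "\<lambda>n. n \<in> card ` ?C", OF this bd]
    obtain n where n: "n \<in> card ` ?C" "\<forall>y. y \<in> card ` ?C \<longrightarrow> y \<le> n" by (elim exE conjE)
    from n(1) obtain J where "J \<in> ?C" "n = card J" by (rule imageE)
    moreover have "\<forall>K\<in>?C. card K \<le> card J"
    proof
      fix K assume "K \<in> ?C"
      then have "card K \<in> card ` ?C" by (rule imageI)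
      then show "card K \<le> card J" using n(2) \<open>n = card J\<close> by simp
    qed
    ultimately show ?thesis using that by simp
  qed
  have "maximalideal J R"
  proof (rule maximalidealI)
    show "ideal J R" "carrier R \<noteq> J" using J by auto
  next
    fix K assume K: "ideal K R" "J \<subseteq> K" "K \<subseteq> carrier R"
    show "K = J \<or> K = carrier R"
    proof (rule ccontr)
      assume "\<not> (K = J \<or> K = carrier R)"
      hence "K \<in> ?C" "J \<subset> K" using K J by auto
      hence "card J < card K" using psubset_card_mono[OF finite_subset[OF K(3) fin]] by simp
      thus False using Jm \<open>K \<in> ?C\<close> by auto
    qed
  qed
  thus ?thesis using J by auto
qed

lemma nonunit_in_max:
  assumes fin: "finite (carrier R)" and loc: "local_ring R" and M: "maximalideal M R"
    and x: "x \<in> carrier R" "x \<notin> Units R"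
  shows "x \<in> M"
proof -
  have I: "ideal (PIdl x) R" using cgenideal_ideal x(1) .
  have "PIdl x \<noteq> carrier R"
  proof
    assume "PIdl x = carrier R"
    then have "\<one> \<in> PIdl x" by auto
    then obtain y where y: "y \<in> carrier R" "\<one> = y \<otimes> x" unfolding cgenideal_def by auto
    then have "y \<otimes> x = \<one>" by simp
    moreover have "x \<otimes> y = \<one>" using y m_comm[OF x(1) y(1)] by simp
    ultimately have "x \<in> Units R" using x(1) y(1) unfolding Units_def by auto
    thus False using x by auto
  qed
  then obtain M' where "maximalideal M' R" "PIdl x \<subseteq> M'" using finite_max_ideal[OF fin I] by auto
  moreover have "M' = M"
  proof -
    have "\<exists>!M. maximalideal M R" using loc unfolding local_ring_def .
    then obtain M0 where "\<And>N. maximalideal N R \<Longrightarrow> N = M0" by (metis ex1E)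
    then show ?thesis using M \<open>maximalideal M' R\<close> by metis
  qed
  moreover have "x \<in> PIdl x" using cgenideal_self x(1) .
  ultimately show ?thesis by blast
qed

lemma unit_not_in_max:
  assumes M: "maximalideal M R" and u: "u \<in> Units R" shows "u \<notin> M"
proof
  assume "u \<in> M"
  moreover have "ideal M R" using M by (rule maximalideal.axioms(1))
  moreover have "inv u \<in> carrier R" using u by (rule Units_inv_closed)
  ultimately have "inv u \<otimes> u \<in> M" by (simp add: ideal.I_l_closed)
  hence "\<one> \<in> M" using u by simp
  hence "M = carrier R" using M ideal.one_imp_carrier maximalideal.axioms(1) by blast
  thus False using M maximalideal.I_notcarr by blast
qed
end

context cring begin

lemma chain_helper:
  assumes "a \<in> carrier R" "b \<in> carrier R" "d \<in> carrier R" "x \<in> carrier R" "y \<in> carrier R" "r \<in> carrier R"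
    and "a = x \<otimes> d" "b = y \<otimes> d" "r \<otimes> x \<in> Units R"
  shows "b \<in> PIdl a"
proof -
  let ?u = "r \<otimes> x"
  have iu: "inv ?u \<in> carrier R" "inv ?u \<otimes> ?u = \<one>" using assms(9) by auto
  have "(y \<otimes> inv ?u \<otimes> r) \<otimes> a = y \<otimes> (inv ?u \<otimes> ?u) \<otimes> d"
    using assms iu(1) by algebra
  also have "\<dots> = b" using iu assms by simp
  finally have "b = (y \<otimes> inv ?u \<otimes> r) \<otimes> a" by simp
  moreover have "y \<otimes> inv ?u \<otimes> r \<in> carrier R" using assms iu by simp
  ultimately show ?thesis unfolding cgenideal_def by blast
qed

lemma pidl_chain:
  assumes fin: "finite (carrier R)" and loc: "local_ring R" and pir: "principal_ideal_ring R"
    and a: "a \<in> carrier R" and b: "b \<in> carrier R"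
  shows "PIdl a \<subseteq> PIdl b \<or> PIdl b \<subseteq> PIdl a"
proof -
  obtain M where M: "maximalideal M R" using loc unfolding local_ring_def by (metis ex1E)
  have Ia: "ideal (PIdl a) R" and Ib: "ideal (PIdl b) R" using a b cgenideal_ideal by auto
  have I: "ideal (PIdl a <+> PIdl b) R" using add_ideals[OF Ia Ib] .
  then obtain d where d: "d \<in> carrier R" "PIdl a <+> PIdl b = PIdl d"
    using pir unfolding principal_ideal_ring_def by blast
  have "a \<oplus> \<zero> \<in> PIdl a <+> PIdl b"
    unfolding set_add_def' using cgenideal_self[OF a] ideal.Icarr additive_subgroup.zero_closed[OF ideal.axioms(1)[OF Ib]] by blast
  then have "a \<in> PIdl d" using a d by simp
  then obtain x where x: "x \<in> carrier R" "a = x \<otimes> d" unfolding cgenideal_def by blast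
  have "\<zero> \<oplus> b \<in> PIdl a <+> PIdl b"
    unfolding set_add_def' using cgenideal_self[OF b] additive_subgroup.zero_closed[OF ideal.axioms(1)[OF Ia]] by blast
  then have "b \<in> PIdl d" using b d by simp
  then obtain y where y: "y \<in> carrier R" "b = y \<otimes> d" unfolding cgenideal_def by blast
  have "d \<in> PIdl a <+> PIdl b" using d cgenideal_self by simp
  then obtain p q where pq: "p \<in> PIdl a" "q \<in> PIdl b" "d = p \<oplus> q" unfolding set_add_def' by blast
  obtain r where r: "r \<in> carrier R" "p = r \<otimes> a" using pq(1) unfolding cgenideal_def by blast
  obtain s where s: "s \<in> carrier R" "q = s \<otimes> b" using pq(2) unfolding cgenideal_def by blast
  have deq: "d = (r \<otimes> x \<oplus> s \<otimes> y) \<otimes> d"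
  proof -
    have "d = r \<otimes> (x \<otimes> d) \<oplus> s \<otimes> (y \<otimes> d)" using pq(3) r s x y by simp
    also have "\<dots> = (r \<otimes> x \<oplus> s \<otimes> y) \<otimes> d" using r s x y d by algebra
    finally show ?thesis .
  qed
  show ?thesis
  proof (cases "r \<otimes> x \<in> Units R")
    case True
    then have "b \<in> PIdl a" using chain_helper[OF a b d(1) x(1) y(1) r(1) x(2) y(2)] by blast
    then show ?thesis using cgenideal_minimal[OF Ia] by blast
  next
    case nrx: False
    show ?thesis
    proof (cases "s \<otimes> y \<in> Units R")
      case True
      then have "a \<in> PIdl b" using chain_helper[OF b a d(1) y(1) x(1) s(1) y(2) x(2)] by blast
      then show ?thesis using cgenideal_minimal[OF Ib] by blast
    next
      case False
      let ?e = "r \<otimes> x \<oplus> s \<otimes> y"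
      have ec: "?e \<in> carrier R" using r s x y by simp
      have "r \<otimes> x \<in> M" "s \<otimes> y \<in> M"
        using nonunit_in_max[OF fin loc M] nrx False r s x y by auto
      then have eM: "?e \<in> M" using M ideal.axioms(1) additive_subgroup.a_closed maximalideal.axioms(1) by metis
      have v: "\<one> \<ominus> ?e \<in> Units R"
      proof (rule ccontr)
        assume "\<one> \<ominus> ?e \<notin> Units R"
        then have "\<one> \<ominus> ?e \<in> M" using nonunit_in_max[OF fin loc M] ec by simp
        then have "(\<one> \<ominus> ?e) \<oplus> ?e \<in> M"
          using eM M ideal.axioms(1) additive_subgroup.a_closed maximalideal.axioms(1) by metis
        moreover have "(\<one> \<ominus> ?e) \<oplus> ?e = \<one>" using ec by algebra
        ultimately have "\<one> \<in> M" by simp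
        then show False using unit_not_in_max[OF M] by simp
      qed
      have "d \<otimes> (\<one> \<ominus> ?e) = d \<ominus> ?e \<otimes> d" using d ec by algebra
      also have "\<dots> = \<zero>" using deq[symmetric] d by (simp add: minus_eq r_neg)
      finally have d0: "d \<otimes> (\<one> \<ominus> ?e) = \<zero>" .
      have "d = (d \<otimes> (\<one> \<ominus> ?e)) \<otimes> inv (\<one> \<ominus> ?e)" using v d ec by (simp add: m_assoc)
      then have "d = \<zero>" using d0 v by simp
      then have "a = \<zero>" using x by simp
      then have "a \<in> PIdl b" using additive_subgroup.zero_closed[OF ideal.axioms(1)[OF Ib]] by simp
      then show ?thesis using cgenideal_minimal[OF Ib] by blast
    qed
  qed
qed
end

context cring begin

lemma pidl_image: "PIdl a = (\<lambda>x. x \<otimes> a) ` carrier R"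
  unfolding cgenideal_def by blast

lemma count_pidl:
  assumes fin: "finite (carrier R)" and a: "a \<in> carrier R"
  shows "card (PIdl a) * card {x \<in> carrier R. a \<otimes> x = \<zero>} = card (carrier R)"
proof -
  let ?A = "{x \<in> carrier R. a \<otimes> x = \<zero>}"
  have "card (carrier R) = (\<Sum>y\<in>(\<lambda>x. x \<otimes> a) ` carrier R. card {x \<in> carrier R. x \<otimes> a = y})"
    using sum.image_gen[OF fin, of "\<lambda>_. (1::nat)" "\<lambda>x. x \<otimes> a"] by simp
  also have "\<dots> = (\<Sum>y\<in>PIdl a. card ?A)"
  proof (rule sum.cong)
    show "(\<lambda>x. x \<otimes> a) ` carrier R = PIdl a" using pidl_image by simp
  next
    fix y assume "y \<in> PIdl a"
    then obtain x0 where x0: "x0 \<in> carrier R" "y = x0 \<otimes> a" unfolding cgenideal_def by blast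
    have "bij_betw (\<lambda>z. z \<oplus> x0) ?A {x \<in> carrier R. x \<otimes> a = y}"
    proof (rule bij_betw_byWitness[where f'="\<lambda>x. x \<ominus> x0"])
      show "\<forall>z\<in>?A. z \<oplus> x0 \<ominus> x0 = z" using x0 by (auto, algebra)
      show "\<forall>z\<in>{x \<in> carrier R. x \<otimes> a = y}. z \<ominus> x0 \<oplus> x0 = z" using x0 by (auto, algebra)
      show "(\<lambda>z. z \<oplus> x0) ` ?A \<subseteq> {x \<in> carrier R. x \<otimes> a = y}"
      proof
        fix w assume "w \<in> (\<lambda>z. z \<oplus> x0) ` ?A"
        then obtain z where z: "z \<in> carrier R" "a \<otimes> z = \<zero>" "w = z \<oplus> x0" by blast
        have "(z \<oplus> x0) \<otimes> a = a \<otimes> z \<oplus> x0 \<otimes> a" using z x0 a by algebra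
        then show "w \<in> {x \<in> carrier R. x \<otimes> a = y}" using z x0 a by simp
      qed
      show "(\<lambda>x. x \<ominus> x0) ` {x \<in> carrier R. x \<otimes> a = y} \<subseteq> ?A"
      proof
        fix w assume "w \<in> (\<lambda>x. x \<ominus> x0) ` {x \<in> carrier R. x \<otimes> a = y}"
        then obtain z where z: "z \<in> carrier R" "z \<otimes> a = x0 \<otimes> a" "w = z \<ominus> x0" using x0 by blast
        have "a \<otimes> (z \<ominus> x0) = z \<otimes> a \<ominus> x0 \<otimes> a" using z x0 a by algebra
        then show "w \<in> ?A" using z x0 a by (simp add: minus_eq r_neg)
      qed
    qed
    then show "card {x \<in> carrier R. x \<otimes> a = y} = card ?A" by (simp add: bij_betw_same_card)
  qed
  also have "\<dots> = card (PIdl a) * card ?A" by simp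
  finally show ?thesis by simp
qed

lemma zero_prod_iff_card:
  assumes fin: "finite (carrier R)" and loc: "local_ring R" and pir: "principal_ideal_ring R"
    and a: "a \<in> carrier R" and b: "b \<in> carrier R"
  shows "a \<otimes> b = \<zero> \<longleftrightarrow> card (PIdl a) * card (PIdl b) \<le> card (carrier R)"
proof -
  let ?A = "{x \<in> carrier R. a \<otimes> x = \<zero>}"
  have IA: "ideal ?A R" using ann_ideal[OF a] .
  then obtain c where c: "c \<in> carrier R" "?A = PIdl c" using pir unfolding principal_ideal_ring_def by blast
  have finA: "finite ?A" using fin by simp
  have finB: "finite (PIdl b)" using fin finite_subset[OF _ fin] ideal.Icarr[OF cgenideal_ideal[OF b]] by blast
  have pos: "card (PIdl a) > 0"
  proof -
    have "a \<in> PIdl a" using cgenideal_self[OF a] .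
    moreover have "finite (PIdl a)" using fin finite_subset[OF _ fin] ideal.Icarr[OF cgenideal_ideal[OF a]] by blast
    ultimately show ?thesis by (auto simp: card_gt_0_iff)
  qed
  have "a \<otimes> b = \<zero> \<longleftrightarrow> PIdl b \<subseteq> ?A"
  proof
    assume "a \<otimes> b = \<zero>"
    then have "b \<in> ?A" using b by simp
    then show "PIdl b \<subseteq> ?A" using cgenideal_minimal[OF IA] by blast
  next
    assume "PIdl b \<subseteq> ?A"
    then show "a \<otimes> b = \<zero>" using cgenideal_self[OF b] by blast
  qed
  also have "\<dots> \<longleftrightarrow> card (PIdl b) \<le> card ?A"
  proof
    assume "PIdl b \<subseteq> ?A" then show "card (PIdl b) \<le> card ?A" using card_mono[OF finA] by simp
  next
    assume cle: "card (PIdl b) \<le> card ?A"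
    show "PIdl b \<subseteq> ?A"
    proof (rule ccontr)
      assume nsub: "\<not> PIdl b \<subseteq> ?A"
      then have "?A \<subset> PIdl b" using pidl_chain[OF fin loc pir b c(1)] c(2) by blast
      then have "card ?A < card (PIdl b)" using psubset_card_mono[OF finB] by simp
      then show False using cle by simp
    qed
  qed
  also have "\<dots> \<longleftrightarrow> card (PIdl a) * card (PIdl b) \<le> card (PIdl a) * card ?A"
    using pos by simp
  also have "\<dots> \<longleftrightarrow> card (PIdl a) * card (PIdl b) \<le> card (carrier R)"
    using count_pidl[OF fin a] by simp
  finally show ?thesis .
qed
end


lemma c35: "coprime (3::nat) 5" unfolding coprime_iff_gcd_eq_1 by code_simp

definition bigv :: "nat \<Rightarrow> nat \<Rightarrow> nat \<Rightarrow> nat" where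
  "bigv e j k = 2^e * (3^j * 5^k)"

lemma N1: "(2::nat)^i dvd 2^j \<longleftrightarrow> i \<le> j" by (simp add: dvd_power_iff_le)

lemma N2: "(2::nat)^i dvd bigv e j k \<longleftrightarrow> i \<le> e"
proof -
  have "coprime ((2::nat)^i) (3^j * 5^k)" by simp
  then show ?thesis unfolding bigv_def by (simp add: coprime_dvd_mult_left_iff N1)
qed

lemma N3: assumes "k \<ge> 1" shows "\<not> bigv e j k dvd 2^i"
proof
  assume h: "bigv e j k dvd 2^i"
  have "(5::nat) dvd 5^k" using assms by (simp add: dvd_power)
  then have "(5::nat) dvd bigv e j k" unfolding bigv_def by (metis dvd_mult2 dvd_mult)
  then have "(5::nat) dvd 2^i" using h by (rule dvd_trans)
  moreover have "coprime (5::nat) (2^i)" by simp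
  ultimately have "is_unit (5::nat)" using coprime_common_divisor[of "5::nat" "2^i" 5] by simp
  then show False by simp
qed

lemma N4: assumes "bigv e j k dvd bigv e' j' k'" shows "j \<le> j'" "k \<le> k'"
proof -
  have c3: "coprime ((3::nat)^j) (2^e' * 5^k')" using c35 by simp
  have "(3::nat)^j dvd bigv e j k" unfolding bigv_def by simp
  then have "(3::nat)^j dvd 3^j' * (2^e' * 5^k')" using assms unfolding bigv_def
    by (metis (no_types, lifting) dvd_trans mult.left_commute)
  then have "(3::nat)^j dvd 3^j'" using c3 by (simp add: coprime_dvd_mult_left_iff)
  then show "j \<le> j'" by (simp add: dvd_power_iff_le)
  have c5: "coprime ((5::nat)^k) (2^e' * 3^j')" using c35 by (simp add: coprime_commute)
  have "(5::nat)^k dvd bigv e j k" unfolding bigv_def by simp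
  then have "(5::nat)^k dvd 5^k' * (2^e' * 3^j')" using assms unfolding bigv_def
    by (metis (no_types, lifting) dvd_trans mult.left_commute mult.commute)
  then have "(5::nat)^k dvd 5^k'" using c5 by (simp add: coprime_dvd_mult_left_iff)
  then show "k \<le> k'" by (simp add: dvd_power_iff_le)
qed



lemma comb:
  fixes V :: "'v set" and w :: "'v \<Rightarrow> nat" and c :: nat and E :: "'v \<Rightarrow> 'v \<Rightarrow> bool"
  assumes fin: "finite V" and ne: "V \<noteq> {}"
    and adj: "\<And>a b. a \<in> V \<Longrightarrow> b \<in> V \<Longrightarrow> a \<noteq> b \<Longrightarrow> (E a b \<longleftrightarrow> c < w a * w b)"
  shows "is_divisor_graph V E"
proof -
  define N where "N = card V"
  have Npos: "N > 0" unfolding N_def using fin ne by (simp add: card_gt_0_iff)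
  obtain idx where bij: "bij_betw idx V {0..<N}" using ex_bij_betw_finite_nat[OF fin] unfolding N_def by (elim exE)
  have idxN: "\<And>a. a \<in> V \<Longrightarrow> idx a < N"
  proof -
    fix a assume "a \<in> V" then have "idx a \<in> {0..<N}" using bij by (rule bij_betw_apply[rotated])
    then show "idx a < N" by simp
  qed
  have inj: "inj_on idx V" using bij by (rule bij_betw_imp_inj_on)
  have idxinj: "\<And>a b. a \<in> V \<Longrightarrow> b \<in> V \<Longrightarrow> idx a = idx b \<Longrightarrow> a = b"
    using inj by (simp add: inj_on_def)
  define C where "C = Suc (Max (w ` V))"
  have wC: "\<And>a. a \<in> V \<Longrightarrow> w a < C" unfolding C_def using fin by (simp add: le_imp_less_Suc)
  define D where "D a = C - w a" for a
  define h where "h a = N * D a + idx a" for a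
  have hmono: "w a' \<le> w a" if "a \<in> V" "a' \<in> V" "h a \<le> h a'" for a a'
  proof (rule ccontr)
    assume "\<not> w a' \<le> w a"
    then have "D a' + 1 \<le> D a" unfolding D_def using wC[OF that(2)] by simp
    then have "N * (D a' + 1) \<le> N * D a" by (rule mult_le_mono2)
    then have "h a' < h a" unfolding h_def using idxN[OF that(2)] by (simp add: algebra_simps)
    then show False using that(3) by simp
  qed
  have hinj: "a = a'" if "a \<in> V" "a' \<in> V" "h a = h a'" for a a'
  proof -
    have "w a = w a'" using hmono[OF that(1,2)] hmono[OF that(2,1)] that(3) by simp
    then have "idx a = idx a'" using that(3) unfolding h_def D_def by simp
    then show ?thesis using idxinj that by blast
  qed
  have hpos: "h a \<ge> 1" if "a \<in> V" for a
  proof -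
    have "D a \<ge> 1" unfolding D_def using wC[OF that] by simp
    then have "N * 1 \<le> N * D a" by (rule mult_le_mono2)
    then show ?thesis unfolding h_def using Npos by linarith
  qed
  define S where "S = {a \<in> V. c < w a * w a}"
  define T where "T b = {a \<in> S. c < w a * w b}" for b
  define e where "e b = (if T b = {} then 0 else Max (h ` T b))" for b
  define f where "f a = (if a \<in> S then 2 ^ h a else bigv (e a) (idx a) (N - idx a))" for a
  have finT: "finite (T b)" for b unfolding T_def S_def using fin by simp
  have mixed: "f a \<noteq> f b \<and> (E a b \<longleftrightarrow> f a dvd f b \<or> f b dvd f a)"
    if a: "a \<in> S" and b: "b \<in> V" "b \<notin> S" for a b
  proof -
    have aV: "a \<in> V" using a S_def by simp
    have ab: "a \<noteq> b" using a b by blast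
    have k1: "N - idx b \<ge> 1" using idxN[OF b(1)] by simp
    have fa: "f a = 2 ^ h a" using a f_def by simp
    have fb: "f b = bigv (e b) (idx b) (N - idx b)" using b f_def by simp
    have nd: "\<not> f b dvd f a" using N3[OF k1] fa fb by simp
    have "f a dvd f b \<longleftrightarrow> h a \<le> e b" using fa fb N2 by simp
    also have "\<dots> \<longleftrightarrow> a \<in> T b"
    proof
      assume le: "h a \<le> e b"
      show "a \<in> T b"
      proof (cases "T b = {}")
        case True
        then show ?thesis using le hpos[OF aV] e_def by simp
      next
        case False
        then have "e b \<in> h ` T b" using e_def finT by simp
        then obtain a' where a': "a' \<in> T b" "e b = h a'" by blast
        then have a'V: "a' \<in> V" and ca': "c < w a' * w b" using T_def S_def by auto
        have "w a' \<le> w a" using hmono[OF aV a'V] le a'(2) by simp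
        then have "w a' * w b \<le> w a * w b" by (rule mult_le_mono1)
        then have "c < w a * w b" using ca' by linarith
        then show ?thesis using a unfolding T_def by simp
      qed
    next
      assume "a \<in> T b"
      then show "h a \<le> e b" using e_def finT by auto
    qed
    also have "\<dots> \<longleftrightarrow> E a b" using adj[OF aV b(1) ab] a T_def by simp
    finally show ?thesis using nd by auto
  qed
  have key: "f a \<noteq> f b \<and> (E a b \<longleftrightarrow> f a dvd f b \<or> f b dvd f a)"
    if ab: "a \<in> V" "b \<in> V" "a \<noteq> b" for a b
  proof (cases "a \<in> S")
    case aS: True
    show ?thesis
    proof (cases "b \<in> S")
      case bS: True
      have E: "E a b"
      proof (cases "w a \<le> w b")
        case True
        then have "w a * w a \<le> w a * w b" by (rule mult_le_mono2)
        moreover have "c < w a * w a" using aS S_def by simp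
        ultimately have "c < w a * w b" by linarith
        then show ?thesis using adj[OF ab] by simp
      next
        case False
        then have "w b * w b \<le> w a * w b" by (intro mult_le_mono1) simp
        moreover have "c < w b * w b" using bS S_def by simp
        ultimately have "c < w a * w b" by linarith
        then show ?thesis using adj[OF ab] by simp
      qed
      have "h a \<noteq> h b" using hinj ab by blast
      moreover have "2 ^ h a dvd (2::nat) ^ h b \<or> 2 ^ h b dvd (2::nat) ^ h a" using N1 by auto
      ultimately show ?thesis using E aS bS f_def by simp
    next
      case False
      then show ?thesis using mixed[OF aS ab(2) False] by simp
    qed
  next
    case aL: False
    show ?thesis
    proof (cases "b \<in> S")
      case bS: True
      have "E a b \<longleftrightarrow> E b a" using adj[OF ab] adj[OF ab(2,1)] ab by (simp add: mult.commute)
      then show ?thesis using mixed[OF bS ab(1) aL] by auto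
    next
      case bL: False
      have "w a * w b \<le> c"
      proof (cases "w a \<le> w b")
        case True
        then have "w a * w b \<le> w b * w b" by (rule mult_le_mono1)
        moreover have "\<not> c < w b * w b" using bL ab S_def by simp
        ultimately show ?thesis by linarith
      next
        case False
        then have "w a * w b \<le> w a * w a" by (intro mult_le_mono2) simp
        moreover have "\<not> c < w a * w a" using aL ab S_def by simp
        ultimately show ?thesis by linarith
      qed
      then have nE: "\<not> E a b" using adj[OF ab] by simp
      have nd: "False" if "x \<in> V" "y \<in> V" "x \<notin> S" "y \<notin> S" "x \<noteq> y" "f x dvd f y" for x y
      proof -
        have "bigv (e x) (idx x) (N - idx x) dvd bigv (e y) (idx y) (N - idx y)"
          using that f_def by simp
        then have "idx x \<le> idx y" "N - idx x \<le> N - idx y" using N4 by blast+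
        then have "idx x = idx y" using idxN[OF that(1)] idxN[OF that(2)] by simp
        then show ?thesis using idxinj that by blast
      qed
      have "\<not> f a dvd f b" using nd[OF ab(1,2) aL bL ab(3)] by blast
      moreover have "\<not> f b dvd f a" using nd[OF ab(2,1) bL aL] ab(3) by blast
      ultimately have "\<not> f a dvd f b" "\<not> f b dvd f a" by auto
      then show ?thesis using nE by auto
    qed
  qed
  have injf: "inj_on f V" using key by (meson inj_onI)
  show ?thesis unfolding is_divisor_graph_def
  proof (intro exI conjI)
    show "f ` V \<noteq> {}" using ne by simp
    show "\<forall>n\<in>f ` V. 0 < n" unfolding f_def bigv_def by auto
    show "bij_betw f V (f ` V)" using injf by (simp add: bij_betw_imageI)
    show "\<forall>a\<in>V. \<forall>b\<in>V. a \<noteq> b \<longrightarrow> E a b = divisor_graph_adj (f a) (f b)"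
      using key unfolding divisor_graph_adj_def by blast
  qed
qed

theorem theorem2p1:
  fixes R :: "('a, 'b) ring_scheme"
  assumes "cring R"
    and "finite (carrier R)"
    and "local_ring R"
    and "principal_ideal_ring R"
    and "zdg_vertices R \<noteq> {}"
  shows "is_divisor_graph (zdg_vertices R) (compl_zdg_adj R)"
proof -
  interpret cring R by fact
  have sub: "zdg_vertices R \<subseteq> carrier R" unfolding zdg_vertices_def zero_divisors_def by blast
  have fin: "finite (zdg_vertices R)" using finite_subset[OF sub assms(2)] .
  show ?thesis
  proof (rule comb[OF fin assms(5), where w="\<lambda>a. card (PIdl\<^bsub>R\<^esub> a)" and c="card (carrier R)"])
    fix a b assume ab: "a \<in> zdg_vertices R" "b \<in> zdg_vertices R" "a \<noteq> b"
    have "a \<in> carrier R" "b \<in> carrier R" using ab sub by auto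
    from zero_prod_iff_card[OF assms(2,3,4) this]
    show "compl_zdg_adj R a b \<longleftrightarrow> card (carrier R) < card (PIdl\<^bsub>R\<^esub> a) * card (PIdl\<^bsub>R\<^esub> b)"
      unfolding compl_zdg_adj_def using ab(3) by auto
  qed
qed

end
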